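(* Let $G$ be a snark and let $e_1$ and $e_2$ be distinct edges of $G$. Let $G(e_1,e_2)$ be the cubic graph obtained from $G$ by subdividing $e_1$ with a new vertex $w_1$, subdividing $e_2$ with a new vertex $w_2$, and adding a new edge $w_1w_2$. Then $G(e_1,e_2)$ is a snark if and only if the graph $G-\{e_1,e_2\}$ (obtained from $G$ by deleting the two edges and keeping all vertices) is not $3$-edge-colourable.
   Context: A snark is a connected cubic graph (loops and parallel edges allowed) which has no proper $3$-edge-colouring. A $3$-edge-colouring of a graph (possibly with vertices of degree less than $3$) is proper if edges sharing an end-vertex receive distinct colours. *)

theory Defs
  imports "Graph_Theory.Digraph" "Graph_Theory.Digraph_Component"
begin

text \<open>An undirected multigraph (loops and parallel edges allowed) is represented by a
  pre_digraph whose arc orientation is ignored: each arc e joins tail G e and head G e.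
  A loop contributes 2 to the degree of its vertex.\<close>

definition degree :: "('v,'e) pre_digraph \<Rightarrow> 'v \<Rightarrow> nat" where
  "degree G v = in_degree G v + out_degree G v"

definition cubic :: "('v,'e) pre_digraph \<Rightarrow> bool" where
  "cubic G \<longleftrightarrow> fin_digraph G \<and> (\<forall>v \<in> verts G. degree G v = 3)"

text \<open>Proper 3-edge-colouring with colours 0,1,2: at every vertex, every colour occurs on
  at most one edge-end (so edges sharing an end-vertex get distinct colours; a loop, which
  meets its vertex twice, can never be properly coloured).\<close>

definition proper_3_edge_colouring :: "('v,'e) pre_digraph \<Rightarrow> ('e \<Rightarrow> nat) \<Rightarrow> bool" where
  "proper_3_edge_colouring G c \<longleftrightarrow>
     (\<forall>e \<in> arcs G. c e \<in> {0,1,2}) \<and>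
     (\<forall>v \<in> verts G. \<forall>k.
        card {e \<in> arcs G. tail G e = v \<and> c e = k} + card {e \<in> arcs G. head G e = v \<and> c e = k} \<le> 1)"

definition three_edge_colourable :: "('v,'e) pre_digraph \<Rightarrow> bool" where
  "three_edge_colourable G \<longleftrightarrow> (\<exists>c. proper_3_edge_colouring G c)"

definition snark :: "('v,'e) pre_digraph \<Rightarrow> bool" where
  "snark G \<longleftrightarrow> cubic G \<and> connected G \<and> \<not> three_edge_colourable G"

definition delete_edges :: "('v,'e) pre_digraph \<Rightarrow> 'e set \<Rightarrow> ('v,'e) pre_digraph" where
  "delete_edges G F = G\<lparr>arcs := arcs G - F\<rparr>"

text \<open>G(e1,e2): subdivide e1 by w1 = Inr False, subdivide e2 by w2 = Inr True, add edge w1w2.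
  Old vertices are Inl v, old edges (other than e1, e2) are Inl e; the new edges are
  Inr 0 = (tail e1) w1, Inr 1 = w1 (head e1), Inr 2 = (tail e2) w2, Inr 3 = w2 (head e2),
  Inr 4 = w1 w2.\<close>

fun G12_tail :: "('v,'e) pre_digraph \<Rightarrow> 'e \<Rightarrow> 'e \<Rightarrow> 'e + nat \<Rightarrow> 'v + bool" where
  "G12_tail G e1 e2 (Inl e) = Inl (tail G e)"
| "G12_tail G e1 e2 (Inr n) =
     (if n = 0 then Inl (tail G e1) else if n = 1 then Inr False
      else if n = 2 then Inl (tail G e2) else if n = 3 then Inr True else Inr False)"

fun G12_head :: "('v,'e) pre_digraph \<Rightarrow> 'e \<Rightarrow> 'e \<Rightarrow> 'e + nat \<Rightarrow> 'v + bool" where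
  "G12_head G e1 e2 (Inl e) = Inl (head G e)"
| "G12_head G e1 e2 (Inr n) =
     (if n = 0 then Inr False else if n = 1 then Inl (head G e1)
      else if n = 2 then Inr True else if n = 3 then Inl (head G e2) else Inr True)"

definition G12 :: "('v,'e) pre_digraph \<Rightarrow> 'e \<Rightarrow> 'e \<Rightarrow> ('v + bool, 'e + nat) pre_digraph" where
  "G12 G e1 e2 = \<lparr> verts = Inl ` verts G \<union> {Inr False, Inr True},
                  arcs = Inl ` (arcs G - {e1, e2}) \<union> Inr ` {0..4},
                  tail = G12_tail G e1 e2,
                  head = G12_head G e1 e2 \<rparr>"

end

theory Submission
  imports Defs
begin

definition cnt :: "('v,'e) pre_digraph \<Rightarrow> ('e \<Rightarrow> nat) \<Rightarrow> 'v \<Rightarrow> nat \<Rightarrow> nat" where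
  "cnt G c v k = (\<Sum>e\<in>arcs G. of_bool (tail G e = v \<and> c e = k) + of_bool (head G e = v \<and> c e = k))"

definition dg :: "('v,'e) pre_digraph \<Rightarrow> 'v \<Rightarrow> nat" where
  "dg G v = (\<Sum>e\<in>arcs G. of_bool (tail G e = v) + of_bool (head G e = v))"

lemma card_cnt:
  assumes "finite (arcs G)"
  shows "card {e \<in> arcs G. tail G e = v \<and> c e = k} + card {e \<in> arcs G. head G e = v \<and> c e = k} = cnt G c v k"
proof -
  have "cnt G c v k = (\<Sum>e\<in>arcs G. of_bool (tail G e = v \<and> c e = k)) + (\<Sum>e\<in>arcs G. of_bool (head G e = v \<and> c e = k))"
    unfolding cnt_def by (simp add: sum.distrib del: sum_of_bool_eq)
  also have "\<dots> = card {e \<in> arcs G. tail G e = v \<and> c e = k} + card {e \<in> arcs G. head G e = v \<and> c e = k}"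
    using assms by (simp add: Int_def conj_commute)
  finally show ?thesis by simp
qed

lemma degree_dg:
  assumes "finite (arcs G)"
  shows "degree G v = dg G v"
proof -
  have "dg G v = (\<Sum>e\<in>arcs G. of_bool (tail G e = v)) + (\<Sum>e\<in>arcs G. of_bool (head G e = v))"
    unfolding dg_def by (simp add: sum.distrib del: sum_of_bool_eq)
  also have "\<dots> = degree G v"
    using assms by (simp add: degree_def in_degree_def out_degree_def in_arcs_def out_arcs_def Int_def conj_commute)
  finally show ?thesis by simp
qed

lemma proper_iff:
  assumes "finite (arcs G)"
  shows "proper_3_edge_colouring G c \<longleftrightarrow> (\<forall>e \<in> arcs G. c e \<in> {0,1,2}) \<and> (\<forall>v \<in> verts G. \<forall>k. cnt G c v k \<le> 1)"
  unfolding proper_3_edge_colouring_def using card_cnt[OF assms] by simp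

lemma dg_cnt:
  assumes "\<forall>e \<in> arcs G. c e \<in> {0,1,2}"
  shows "dg G v = cnt G c v 0 + cnt G c v 1 + cnt G c v 2"
  unfolding dg_def cnt_def
  by (simp only: sum.distrib[symmetric]) (rule sum.cong, simp, use assms in auto)

lemma sum_Inr5: "(\<Sum>s\<in>{0..4::nat}. f s) = f 0 + f 1 + f 2 + f 3 + f 4"
proof -
  have "{0..4::nat} = {0,1,2,3,4}" by auto
  then show ?thesis by (simp add: add.assoc)
qed

lemma arcs_G12_sum:
  assumes "finite (arcs G)"
  shows "(\<Sum>x\<in>arcs (G12 G e1 e2). f x) = (\<Sum>e\<in>arcs G - {e1,e2}. f (Inl e)) + f (Inr 0) + f (Inr 1) + f (Inr 2) + f (Inr 3) + f (Inr 4)"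
proof -
  have "(\<Sum>x\<in>arcs (G12 G e1 e2). f x) = (\<Sum>x\<in>Inl ` (arcs G - {e1,e2}). f x) + (\<Sum>x\<in>Inr ` {0..4}. f x)"
    unfolding G12_def using assms by (simp, intro sum.union_disjoint) auto
  also have "\<dots> = (\<Sum>e\<in>arcs G - {e1,e2}. f (Inl e)) + (\<Sum>s\<in>{0..4}. f (Inr s))"
    by (simp add: sum.reindex)
  finally show ?thesis by (simp add: sum_Inr5 add.assoc)
qed

lemma sum_del2:
  assumes "finite A" "e1 \<in> A" "e2 \<in> A" "e1 \<noteq> e2"
  shows "(\<Sum>e\<in>A. f e) = (\<Sum>e\<in>A - {e1,e2}. f e) + f e1 + f e2"
proof -
  have "A = (A - {e1,e2}) \<union> {e1,e2}" using assms by auto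
  then have "(\<Sum>e\<in>A. f e) = (\<Sum>e\<in>(A - {e1,e2}) \<union> {e1,e2}. f e)" by simp
  also have "\<dots> = (\<Sum>e\<in>A - {e1,e2}. f e) + (\<Sum>e\<in>{e1,e2}. f e)"
    using assms by (intro sum.union_disjoint) auto
  finally show ?thesis using assms by (simp add: add.assoc)
qed

lemma G12_simps[simp]:
  "verts (G12 G e1 e2) = Inl ` verts G \<union> {Inr False, Inr True}"
  "tail (G12 G e1 e2) = G12_tail G e1 e2"
  "head (G12 G e1 e2) = G12_head G e1 e2"
  by (simp_all add: G12_def)

lemma del_simps[simp]:
  "verts (delete_edges G F) = verts G"
  "arcs (delete_edges G F) = arcs G - F"
  "tail (delete_edges G F) = tail G"
  "head (delete_edges G F) = head G"
  by (simp_all add: delete_edges_def)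

lemma cnt_G12_Inl:
  assumes "finite (arcs G)"
  shows "cnt (G12 G e1 e2) d (Inl v) k = cnt (delete_edges G {e1,e2}) (d \<circ> Inl) v k
    + of_bool (tail G e1 = v \<and> d (Inr 0) = k) + of_bool (head G e1 = v \<and> d (Inr 1) = k)
    + of_bool (tail G e2 = v \<and> d (Inr 2) = k) + of_bool (head G e2 = v \<and> d (Inr 3) = k)"
  unfolding cnt_def using assms by (simp add: arcs_G12_sum del: sum_of_bool_eq)

lemma cnt_G12_F:
  assumes "finite (arcs G)"
  shows "cnt (G12 G e1 e2) d (Inr False) k = of_bool (d (Inr 0) = k) + of_bool (d (Inr 1) = k) + of_bool (d (Inr 4) = k)"
  unfolding cnt_def using assms by (simp add: arcs_G12_sum del: sum_of_bool_eq)

lemma cnt_G12_T: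
  assumes "finite (arcs G)"
  shows "cnt (G12 G e1 e2) d (Inr True) k = of_bool (d (Inr 2) = k) + of_bool (d (Inr 3) = k) + of_bool (d (Inr 4) = k)"
  unfolding cnt_def using assms by (simp add: arcs_G12_sum del: sum_of_bool_eq)

lemma dg_G12_Inl:
  assumes "finite (arcs G)"
  shows "dg (G12 G e1 e2) (Inl v) = dg (delete_edges G {e1,e2}) v
    + of_bool (tail G e1 = v) + of_bool (head G e1 = v) + of_bool (tail G e2 = v) + of_bool (head G e2 = v)"
  unfolding dg_def using assms by (simp add: arcs_G12_sum del: sum_of_bool_eq)

lemma dg_G12_F:
  assumes "finite (arcs G)"
  shows "dg (G12 G e1 e2) (Inr b) = 3"
  unfolding dg_def using assms by (cases b) (simp_all add: arcs_G12_sum del: sum_of_bool_eq)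

lemma dg_del:
  assumes "finite (arcs G)" "e1 \<in> arcs G" "e2 \<in> arcs G" "e1 \<noteq> e2"
  shows "dg G v = dg (delete_edges G {e1,e2}) v
    + of_bool (tail G e1 = v) + of_bool (head G e1 = v) + of_bool (tail G e2 = v) + of_bool (head G e2 = v)"
  unfolding dg_def by (subst sum_del2[OF assms]) (simp add: add.assoc del: sum_of_bool_eq)

lemma cnt_del:
  assumes "finite (arcs G)" "e1 \<in> arcs G" "e2 \<in> arcs G" "e1 \<noteq> e2"
  shows "cnt G c v k = cnt (delete_edges G {e1,e2}) c v k
    + of_bool (tail G e1 = v \<and> c e1 = k) + of_bool (head G e1 = v \<and> c e1 = k)
    + of_bool (tail G e2 = v \<and> c e2 = k) + of_bool (head G e2 = v \<and> c e2 = k)"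
  unfolding cnt_def by (subst sum_del2[OF assms]) (simp add: add.assoc del: sum_of_bool_eq)

lemma cnt_cong:
  assumes "\<forall>e \<in> arcs G. c e = d e"
  shows "cnt G c v k = cnt G d v k"
  unfolding cnt_def using assms by (intro sum.cong) auto

lemma arcs_G12: "arcs (G12 G e1 e2) = Inl ` (arcs G - {e1, e2}) \<union> Inr ` {0..4}"
  by (simp add: G12_def)

lemma conn_iff: "connected X \<longleftrightarrow> verts X \<noteq> {} \<and>
   (\<forall>u\<in>verts X. \<forall>v\<in>verts X. (u,v) \<in> rtrancl_on (verts X) (parcs (mk_symmetric X)))"
  by (simp add: connected_def strongly_connected_def reachable_def)

lemma connected_G12:
  assumes wf: "wf_digraph G" and con: "connected G" and a1: "e1 \<in> arcs G" and a2: "e2 \<in> arcs G"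
  shows "connected (G12 G e1 e2)"
proof -
  let ?W = "verts (G12 G e1 e2)"
  let ?P = "parcs (mk_symmetric (G12 G e1 e2))"
  let ?R = "rtrancl_on ?W ?P"
  have inV: "tail G e \<in> verts G" "head G e \<in> verts G" if "e \<in> arcs G" for e
    using wf that by (auto simp: wf_digraph_def)
  have step: "(x, y) \<in> ?P \<Longrightarrow> x \<in> ?W \<Longrightarrow> y \<in> ?W \<Longrightarrow> (x, y) \<in> ?R" for x y
    by (rule rtrancl_on_into_rtrancl_on[OF rtrancl_on_refl]) auto
  have arcP: "(G12_tail G e1 e2 x, G12_head G e1 e2 x) \<in> ?P" "(G12_head G e1 e2 x, G12_tail G e1 e2 x) \<in> ?P"
    if "x \<in> arcs (G12 G e1 e2)" for x
    using that by (auto simp: parcs_mk_symmetric)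
  have in0: "Inr 0 \<in> arcs (G12 G e1 e2)" "Inr 1 \<in> arcs (G12 G e1 e2)"
     "Inr 2 \<in> arcs (G12 G e1 e2)" "Inr 3 \<in> arcs (G12 G e1 e2)"
    by (auto simp: arcs_G12)
  have F1: "(Inl (tail G e1), Inr False) \<in> ?R" "(Inr False, Inl (tail G e1)) \<in> ?R"
    "(Inr False, Inl (head G e1)) \<in> ?R" "(Inl (head G e1), Inr False) \<in> ?R"
    using arcP[OF in0(1)] arcP[OF in0(2)] inV[OF a1] by (auto intro!: step[simplified])
  have T1: "(Inl (tail G e2), Inr True) \<in> ?R" "(Inr True, Inl (tail G e2)) \<in> ?R"
    "(Inr True, Inl (head G e2)) \<in> ?R" "(Inl (head G e2), Inr True) \<in> ?R"
    using arcP[OF in0(3)] arcP[OF in0(4)] inV[OF a2] by (auto intro!: step[simplified])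
  have edge: "(Inl (tail G e), Inl (head G e)) \<in> ?R \<and> (Inl (head G e), Inl (tail G e)) \<in> ?R"
    if e: "e \<in> arcs G" for e
  proof (cases "e = e1 \<or> e = e2")
    case True
    then show ?thesis using F1 T1 by (auto intro: rtrancl_on_trans)
  next
    case False
    then have "Inl e \<in> arcs (G12 G e1 e2)" using e by (auto simp: arcs_G12)
    from arcP[OF this] show ?thesis by - (rule conjI; rule step, use inV[OF e] in auto)
  qed
  have lift: "(Inl u, Inl v) \<in> ?R" if "(u, v) \<in> rtrancl_on (verts G) (parcs (mk_symmetric G))" for u v
    using that
  proof (induct rule: rtrancl_on_induct)
    case base then show ?case by auto
  next
    case (step y z)
    from step(2) obtain e where "e \<in> arcs G" "(y, z) = (tail G e, head G e) \<or> (y, z) = (head G e, tail G e)"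
      by (auto simp: parcs_mk_symmetric)
    then have "(Inl y, Inl z) \<in> ?R" using edge by auto
    with step(5) show ?case by (rule rtrancl_on_trans)
  qed
  have rep: "\<exists>u \<in> verts G. (x, Inl u) \<in> ?R \<and> (Inl u, x) \<in> ?R" if xW: "x \<in> ?W" for x
  proof -
    consider (l) u where "x = Inl u" "u \<in> verts G" | (f) "x = Inr False" | (t) "x = Inr True"
      using xW by auto
    then show ?thesis
    proof cases
      case l then show ?thesis by (intro bexI[of _ u]) auto
    next
      case f then show ?thesis using F1 inV[OF a1] by blast
    next
      case t then show ?thesis using T1 inV[OF a2] by blast
    qed
  qed
  have cG: "(u, v) \<in> rtrancl_on (verts G) (parcs (mk_symmetric G))" if "u \<in> verts G" "v \<in> verts G" for u v
    using con that unfolding conn_iff by simp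
  show ?thesis unfolding conn_iff
  proof (intro conjI ballI)
    show "?W \<noteq> {}" by simp
  next
    fix x y assume "x \<in> ?W" "y \<in> ?W"
    then obtain u v where u: "u \<in> verts G" "(x, Inl u) \<in> ?R" and v: "v \<in> verts G" "(Inl v, y) \<in> ?R"
      using rep by blast
    have "(Inl u, Inl v) \<in> ?R" using lift cG u v by blast
    then show "(x, y) \<in> ?R" using u v by (blast intro: rtrancl_on_trans)
  qed
qed

lemma five: "{0..4::nat} = {0,1,2,3,4}" by auto

lemma fin_G12:
  assumes "fin_digraph G" "e1 \<in> arcs G" "e2 \<in> arcs G"
  shows "fin_digraph (G12 G e1 e2)"
  using assms unfolding fin_digraph_def fin_digraph_axioms_def wf_digraph_def
  by (auto simp: arcs_G12 five)

lemma cubic_G12: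
  assumes "cubic G" "e1 \<in> arcs G" "e2 \<in> arcs G" "e1 \<noteq> e2"
  shows "cubic (G12 G e1 e2)"
proof -
  have fG: "fin_digraph G" using assms by (simp add: cubic_def)
  then have fa: "finite (arcs G)" by (simp add: fin_digraph_def fin_digraph_axioms_def)
  have f12: "fin_digraph (G12 G e1 e2)" by (rule fin_G12[OF fG assms(2,3)])
  have fa12: "finite (arcs (G12 G e1 e2))" using fa by (simp add: arcs_G12)
  show ?thesis unfolding cubic_def
  proof (intro conjI f12 ballI)
    fix x assume "x \<in> verts (G12 G e1 e2)"
    then consider (l) u where "x = Inl u" "u \<in> verts G" | (r) b where "x = Inr b" by auto
    then show "degree (G12 G e1 e2) x = 3"
    proof cases
      case l
      have "degree G u = 3" using assms l by (simp add: cubic_def)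
      have "dg (G12 G e1 e2) (Inl u) = dg G u"
        by (simp only: dg_G12_Inl[OF fa] dg_del[OF fa assms(2-4)])
      then show ?thesis using l degree_dg[OF fa12, of x] degree_dg[OF fa, of u] \<open>degree G u = 3\<close>
        by simp
    next
      case r then show ?thesis using degree_dg[OF fa12, of x] dg_G12_F[OF fa, of e1 e2 b] by simp
    qed
  qed
qed

lemma restrict_col:
  assumes fa: "finite (arcs G)" and wf: "wf_digraph G"
    and p: "proper_3_edge_colouring (G12 G e1 e2) d"
  shows "proper_3_edge_colouring (delete_edges G {e1,e2}) (d \<circ> Inl)"
proof -
  have fa12: "finite (arcs (G12 G e1 e2))" using fa by (simp add: arcs_G12)
  have fH: "finite (arcs (delete_edges G {e1,e2}))" using fa by simp
  from p[unfolded proper_iff[OF fa12]] have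
    c1: "\<forall>x\<in>arcs (G12 G e1 e2). d x \<in> {0,1,2}" and
    c2: "\<forall>x\<in>verts (G12 G e1 e2). \<forall>k. cnt (G12 G e1 e2) d x k \<le> 1" by auto
  show ?thesis unfolding proper_iff[OF fH]
  proof (intro conjI ballI allI)
    fix e assume "e \<in> arcs (delete_edges G {e1, e2})"
    then show "(d \<circ> Inl) e \<in> {0,1,2}" using c1 by (auto simp: arcs_G12)
  next
    fix v k assume "v \<in> verts (delete_edges G {e1, e2})"
    then have "cnt (G12 G e1 e2) d (Inl v) k \<le> 1" using c2 by auto
    then show "cnt (delete_edges G {e1, e2}) (d \<circ> Inl) v k \<le> 1"
      unfolding cnt_G12_Inl[OF fa] by linarith
  qed
qed

lemma combin:
  fixes a b c d :: nat
  assumes "a \<in> {0,1,2}" "b \<in> {0,1,2}" "c \<in> {0,1,2}" "d \<in> {0,1,2}"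
    and "\<And>k. N k = of_bool (a = k) + of_bool (b = k) + of_bool (c = k) + of_bool (d = k)"
    and "even (N 0 + N 1)" "even (N 1 + N 2)"
  shows "(a = b \<and> c = d) \<or> (a \<noteq> b \<and> c \<noteq> d \<and> {a,b} = {c,d})"
proof -
  have e: "even (N 0 + N 1)" "even (N 1 + N 2)" by fact+
  from assms(1-4) show ?thesis
    apply (simp only: insert_iff empty_iff simp_thms)
    apply (elim disjE)
    using e unfolding assms(5) by (simp_all add: insert_commute)
qed

lemma sum_ind:
  assumes "finite V" "x \<in> V"
  shows "(\<Sum>v\<in>V. (of_bool (x = v \<and> Q) :: nat)) = of_bool Q"
proof -
  have "(\<Sum>v\<in>V. (of_bool (x = v \<and> Q) :: nat)) = (\<Sum>v\<in>V. if v = x then of_bool Q else 0)"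
    by (rule sum.cong) auto
  also have "\<dots> = of_bool Q" using assms by (simp add: sum.delta)
  finally show ?thesis .
qed

lemma third:
  fixes a b :: nat
  assumes "a \<in> {0,1,2}" "b \<in> {0,1,2}" "a \<noteq> b"
  shows "3 - a - b \<in> {0,1,2} \<and> 3 - a - b \<noteq> a \<and> 3 - a - b \<noteq> b"
  using assms by auto

lemma extend_col:
  assumes cub: "cubic G" and ncol: "\<not> three_edge_colourable G"
    and a1: "e1 \<in> arcs G" and a2: "e2 \<in> arcs G" and ne: "e1 \<noteq> e2"
    and pc: "proper_3_edge_colouring (delete_edges G {e1,e2}) c"
  shows "three_edge_colourable (G12 G e1 e2)"
proof -
  let ?H = "delete_edges G {e1,e2}"
  have fG: "fin_digraph G" using cub by (simp add: cubic_def)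
  then have fa: "finite (arcs G)" and fV: "finite (verts G)"
    by (simp_all add: fin_digraph_def fin_digraph_axioms_def)
  have inV: "tail G e \<in> verts G" "head G e \<in> verts G" if "e \<in> arcs G" for e
    using fG that by (auto simp: fin_digraph_def wf_digraph_def)
  have fH: "finite (arcs ?H)" using fa by simp
  from pc[unfolded proper_iff[OF fH]] have
    c1: "\<forall>e\<in>arcs ?H. c e \<in> {0,1,2}" and
    c2: "\<forall>v\<in>verts G. \<forall>k. cnt ?H c v k \<le> 1" by auto
  define p :: "nat \<Rightarrow> 'a" where "p s = (if s = 0 then tail G e1 else if s = 1 then head G e1
     else if s = 2 then tail G e2 else head G e2)" for s
  define S :: "nat set" where "S = {0,1,2,3}"
  define sl where "sl v = {s \<in> S. p s = v}" for v
  define miss where "miss v = {k \<in> {0,1,2::nat}. cnt ?H c v k = 0}" for v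
  have pV: "p s \<in> verts G" for s using inV a1 a2 by (simp add: p_def)
  have fS: "finite S" by (simp add: S_def)
  have card_sl: "card (sl v) = of_bool (tail G e1 = v) + of_bool (head G e1 = v) + of_bool (tail G e2 = v) + of_bool (head G e2 = v)" for v
  proof -
    have "card (sl v) = (\<Sum>s\<in>S. of_bool (p s = v))"
      using fS by (simp add: sl_def Int_def)
    also have "\<dots> = of_bool (tail G e1 = v) + of_bool (head G e1 = v) + of_bool (tail G e2 = v) + of_bool (head G e2 = v)"
      by (simp add: S_def p_def del: sum_of_bool_eq)
    finally show ?thesis .
  qed
  have card_miss: "card (miss v) = card (sl v)" if v: "v \<in> verts G" for v
  proof -
    have "degree G v = 3" using cub v by (simp add: cubic_def)
    then have "dg G v = 3" using degree_dg[OF fa] by simp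
    then have "dg ?H v + card (sl v) = 3" unfolding card_sl dg_del[OF fa a1 a2 ne] by simp
    moreover have "dg ?H v = cnt ?H c v 0 + cnt ?H c v 1 + cnt ?H c v 2" by (rule dg_cnt[OF c1])
    moreover have "card (miss v) = of_bool (cnt ?H c v 0 = 0) + of_bool (cnt ?H c v 1 = 0) + of_bool (cnt ?H c v 2 = 0)"
    proof -
      have "card (miss v) = (\<Sum>k\<in>{0,1,2::nat}. of_bool (cnt ?H c v k = 0))"
        by (simp add: miss_def Int_def)
      then show ?thesis by simp
    qed
    moreover have "cnt ?H c v 0 \<le> 1" "cnt ?H c v 1 \<le> 1" "cnt ?H c v 2 \<le> 1" using c2 v by auto
    ultimately show ?thesis by auto
  qed
  have "\<forall>v\<in>verts G. \<exists>f. bij_betw f (sl v) (miss v)"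
  proof
    fix v assume "v \<in> verts G"
    show "\<exists>f. bij_betw f (sl v) (miss v)"
      by (rule finite_same_card_bij) (use card_miss[OF \<open>v \<in> verts G\<close>] fS in \<open>auto simp: sl_def miss_def\<close>)
  qed
  then obtain \<beta> where \<beta>: "\<And>v. v \<in> verts G \<Longrightarrow> bij_betw (\<beta> v) (sl v) (miss v)" by metis
  define col where "col s = \<beta> (p s) s" for s
  have colm: "col s \<in> miss (p s)" if "s \<in> S" for s
    unfolding col_def using \<beta>[OF pV[of s]] that by (auto simp: sl_def bij_betw_def)
  have col3: "col s \<in> {0,1,2}" if "s \<in> S" for s using colm[OF that] by (auto simp: miss_def)
  have slotsum: "(\<Sum>s\<in>S. of_bool (p s = v \<and> col s = k)) = (of_bool (k \<in> miss v) :: nat)"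
    if v: "v \<in> verts G" for v k
  proof -
    have eq: "S \<inter> {s. p s = v \<and> col s = k} = {s \<in> sl v. \<beta> v s = k}"
      by (auto simp: sl_def col_def)
    have inj: "inj_on (\<beta> v) {s \<in> sl v. \<beta> v s = k}"
      using \<beta>[OF v] by (auto simp: bij_betw_def intro: inj_on_subset)
    have ex: "k \<in> miss v \<Longrightarrow> \<exists>s\<in>sl v. \<beta> v s = k" using \<beta>[OF v] unfolding bij_betw_def by (metis imageE)
    have img: "\<beta> v ` {s \<in> sl v. \<beta> v s = k} = {k} \<inter> miss v"
    proof
      show "\<beta> v ` {s \<in> sl v. \<beta> v s = k} \<subseteq> {k} \<inter> miss v" using \<beta>[OF v] by (auto simp: bij_betw_def)
      show "{k} \<inter> miss v \<subseteq> \<beta> v ` {s \<in> sl v. \<beta> v s = k}" using ex by (auto simp: image_iff)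
    qed
    have "(\<Sum>s\<in>S. of_bool (p s = v \<and> col s = k)) = card {s \<in> sl v. \<beta> v s = k}"
      using fS by (simp add: eq)
    also have "\<dots> = card ({k} \<inter> miss v)" using card_image[OF inj] img by simp
    also have "\<dots> = of_bool (k \<in> miss v)" by auto
    finally show ?thesis .
  qed
  have slot4: "of_bool (tail G e1 = v \<and> col 0 = k) + of_bool (head G e1 = v \<and> col 1 = k)
     + of_bool (tail G e2 = v \<and> col 2 = k) + of_bool (head G e2 = v \<and> col 3 = k) = (of_bool (k \<in> miss v) :: nat)"
    if v: "v \<in> verts G" for v k
    using slotsum[OF v, of k] by (simp add: S_def p_def add.assoc del: sum_of_bool_eq)
  have cntb: "cnt ?H c v k + of_bool (k \<in> miss v) \<le> 1" if v: "v \<in> verts G" for v k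
    using c2 v by (cases "k \<in> miss v") (auto simp: miss_def)
  have cnt1: "cnt ?H c v k + of_bool (k \<in> miss v) = 1" if v: "v \<in> verts G" and k: "k \<in> {0,1,2}" for v k
  proof -
    have "cnt ?H c v k \<le> 1" using c2 v by auto
    then consider "cnt ?H c v k = 0" | "cnt ?H c v k = 1" by linarith
    then show ?thesis using k by cases (auto simp: miss_def)
  qed
  define N where "N k = (\<Sum>s\<in>S. (of_bool (col s = k) :: nat))" for k
  define X where "X k = (\<Sum>e\<in>arcs ?H. (of_bool (c e = k) :: nat))" for k
  have N_eq: "N k = (\<Sum>v\<in>verts G. (of_bool (k \<in> miss v) :: nat))" for k
  proof -
    have "N k = (\<Sum>s\<in>S. \<Sum>v\<in>verts G. (of_bool (p s = v \<and> col s = k) :: nat))"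
      unfolding N_def by (rule sum.cong[OF refl]) (simp only: sum_ind[OF fV pV])
    also have "\<dots> = (\<Sum>v\<in>verts G. \<Sum>s\<in>S. (of_bool (p s = v \<and> col s = k) :: nat))"
      by (rule sum.swap)
    also have "\<dots> = (\<Sum>v\<in>verts G. (of_bool (k \<in> miss v) :: nat))"
      by (rule sum.cong[OF refl]) (simp only: slotsum)
    finally show ?thesis .
  qed
  have X2: "(\<Sum>v\<in>verts G. cnt ?H c v k) = 2 * X k" for k
  proof -
    have "(\<Sum>v\<in>verts G. cnt ?H c v k) = (\<Sum>v\<in>verts G. \<Sum>e\<in>arcs ?H. (of_bool (tail G e = v \<and> c e = k) + of_bool (head G e = v \<and> c e = k) :: nat))"
      by (simp add: cnt_def del: sum_of_bool_eq)
    also have "\<dots> = (\<Sum>e\<in>arcs ?H. \<Sum>v\<in>verts G. (of_bool (tail G e = v \<and> c e = k) + of_bool (head G e = v \<and> c e = k) :: nat))"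
      by (rule sum.swap)
    also have "\<dots> = (\<Sum>e\<in>arcs ?H. 2 * (of_bool (c e = k) :: nat))"
    proof (rule sum.cong[OF refl])
      fix e assume "e \<in> arcs ?H"
      then have "e \<in> arcs G" by simp
      then show "(\<Sum>v\<in>verts G. (of_bool (tail G e = v \<and> c e = k) + of_bool (head G e = v \<and> c e = k) :: nat)) = 2 * of_bool (c e = k)"
        by (simp only: sum.distrib sum_ind[OF fV inV(1)] sum_ind[OF fV inV(2)])
    qed
    also have "\<dots> = 2 * X k" by (simp add: X_def sum_distrib_left del: sum_of_bool_eq)
    finally show ?thesis .
  qed
  have NX: "N k + 2 * X k = card (verts G)" if k: "k \<in> {0,1,2}" for k
  proof -
    have "N k + 2 * X k = (\<Sum>v\<in>verts G. (of_bool (k \<in> miss v) :: nat) + cnt ?H c v k)"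
      unfolding N_eq X2[symmetric] by (simp add: sum.distrib del: sum_of_bool_eq)
    also have "\<dots> = (\<Sum>v\<in>verts G. 1)"
      by (rule sum.cong[OF refl]) (metis cnt1 k add.commute)
    finally show ?thesis by simp
  qed
  have n0: "N 0 + 2 * X 0 = card (verts G)" using NX[of 0] by simp
  have n1: "N 1 + 2 * X 1 = card (verts G)" using NX[of 1] by simp
  have n2: "N 2 + 2 * X 2 = card (verts G)" using NX[of 2] by simp
  have ev: "even (N 0 + N 1)" "even (N 1 + N 2)"
    using n0 n1 n2 by presburger+
  have Nexp: "N k = of_bool (col 0 = k) + of_bool (col 1 = k) + of_bool (col 2 = k) + of_bool (col 3 = k)" for k
    by (simp add: N_def S_def add.assoc del: sum_of_bool_eq)
  have cc: "col 0 \<in> {0,1,2}" "col 1 \<in> {0,1,2}" "col 2 \<in> {0,1,2}" "col 3 \<in> {0,1,2}"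
    using col3 by (auto simp: S_def)
  from combin[OF cc Nexp ev] consider (same) "col 0 = col 1" "col 2 = col 3"
    | (diff) "col 0 \<noteq> col 1" "col 2 \<noteq> col 3" "{col 0, col 1} = {col 2, col 3}" by blast
  then show ?thesis
  proof cases
    case same
    define c' where "c' = c(e1 := col 0, e2 := col 2)"
    have "proper_3_edge_colouring G c'"
      unfolding proper_iff[OF fa]
    proof (intro conjI ballI allI)
      fix e assume "e \<in> arcs G" then show "c' e \<in> {0,1,2}" using c1 cc by (auto simp: c'_def)
    next
      fix v k assume v: "v \<in> verts G"
      have h1: "cnt ?H c' v k = cnt ?H c v k" by (rule cnt_cong) (auto simp: c'_def)
      have h2: "c' e1 = col 0" "c' e2 = col 2" using ne by (auto simp: c'_def)
      have "cnt G c' v k = cnt ?H c v k + (of_bool (tail G e1 = v \<and> col 0 = k) + of_bool (head G e1 = v \<and> col 1 = k)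
          + of_bool (tail G e2 = v \<and> col 2 = k) + of_bool (head G e2 = v \<and> col 3 = k))"
        unfolding cnt_del[OF fa a1 a2 ne] h1 h2 using same by (simp add: add.assoc)
      then show "cnt G c' v k \<le> 1" using slot4[OF v, of k] cntb[OF v, of k] by simp
    qed
    then show ?thesis using ncol unfolding three_edge_colourable_def by blast
  next
    case diff
    define f where "f = 3 - col 0 - col 1"
    have fp: "f \<in> {0,1,2}" "f \<noteq> col 0" "f \<noteq> col 1" using third[OF cc(1,2) diff(1)] by (auto simp: f_def)
    have "col 2 \<in> {col 0, col 1}" "col 3 \<in> {col 0, col 1}" using diff(3) by auto
    then have fq: "f \<noteq> col 2" "f \<noteq> col 3" using fp by auto
    define d :: "'b + nat \<Rightarrow> nat" where "d = case_sum c (\<lambda>s::nat. if s = 0 then col 0 else if s = 1 then col 1 else if s = 2 then col 2 else if s = 3 then col 3 else f)"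
    have dI: "d (Inr 0) = col 0" "d (Inr 1) = col 1" "d (Inr 2) = col 2" "d (Inr 3) = col 3" "d (Inr 4) = f"
      "d \<circ> Inl = c" by (auto simp: d_def)
    have fa12: "finite (arcs (G12 G e1 e2))" using fa by (simp add: arcs_G12)
    have "proper_3_edge_colouring (G12 G e1 e2) d"
      unfolding proper_iff[OF fa12]
    proof (intro conjI ballI allI)
      fix x assume "x \<in> arcs (G12 G e1 e2)"
      then consider (l) e where "x = Inl e" "e \<in> arcs G - {e1,e2}" | (r) s where "x = Inr s" "s \<in> {0,1,2,3,4}"
        unfolding arcs_G12 five by blast
      then show "d x \<in> {0,1,2}"
      proof cases
        case l
        then have "d x = c e" by (simp add: d_def)
        then show ?thesis using c1 l(2) by simp
      next
        case r
        from r(2) show ?thesis unfolding r(1)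
          apply (simp only: insert_iff empty_iff simp_thms)
          apply (elim disjE)
          using dI cc fp by simp_all
      qed
    next
      fix x k assume "x \<in> verts (G12 G e1 e2)"
      then consider (l) v where "x = Inl v" "v \<in> verts G" | (r) b where "x = Inr b" by auto
      then show "cnt (G12 G e1 e2) d x k \<le> 1"
      proof cases
        case l
        have "cnt (G12 G e1 e2) d x k = cnt ?H c v k + (of_bool (tail G e1 = v \<and> col 0 = k) + of_bool (head G e1 = v \<and> col 1 = k)
          + of_bool (tail G e2 = v \<and> col 2 = k) + of_bool (head G e2 = v \<and> col 3 = k))"
          unfolding l cnt_G12_Inl[OF fa] dI by (simp add: add.assoc)
        then show ?thesis using slot4[OF l(2), of k] cntb[OF l(2), of k] by simp
      next
        case r
        show ?thesis
        proof (cases b)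
          case True
          have "cnt (G12 G e1 e2) d x k = of_bool (col 2 = k) + of_bool (col 3 = k) + of_bool (f = k)"
            using r True by (simp add: cnt_G12_T[OF fa] d_def)
          then show ?thesis using fq diff(2) by (cases "col 2 = k"; cases "col 3 = k"; cases "f = k") simp_all
        next
          case False
          have "cnt (G12 G e1 e2) d x k = of_bool (col 0 = k) + of_bool (col 1 = k) + of_bool (f = k)"
            using r False by (simp add: cnt_G12_F[OF fa] d_def)
          then show ?thesis using fp diff(1) by (cases "col 0 = k"; cases "col 1 = k"; cases "f = k") simp_all
        qed
      qed
    qed
    then show ?thesis unfolding three_edge_colourable_def by blast
  qed
qed

theorem proposition4:
  fixes G :: "('v,'e) pre_digraph" and e1 e2 :: 'e
  assumes "snark G" and "e1 \<in> arcs G" and "e2 \<in> arcs G" and "e1 \<noteq> e2"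
  shows "snark (G12 G e1 e2) \<longleftrightarrow> \<not> three_edge_colourable (delete_edges G {e1, e2})"
proof -
  have cub: "cubic G" and con: "connected G" and ncol: "\<not> three_edge_colourable G"
    using assms(1) by (simp_all add: snark_def)
  have fG: "fin_digraph G" using cub by (simp add: cubic_def)
  then have fa: "finite (arcs G)" and wf: "wf_digraph G"
    by (simp_all add: fin_digraph_def fin_digraph_axioms_def)
  have c12: "cubic (G12 G e1 e2)" by (rule cubic_G12[OF cub assms(2-4)])
  have conn12: "connected (G12 G e1 e2)" by (rule connected_G12[OF wf con assms(2,3)])
  show ?thesis
  proof
    assume s: "snark (G12 G e1 e2)"
    show "\<not> three_edge_colourable (delete_edges G {e1, e2})"
    proof
      assume "three_edge_colourable (delete_edges G {e1, e2})"
      then obtain c where "proper_3_edge_colouring (delete_edges G {e1, e2}) c"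
        by (auto simp: three_edge_colourable_def)
      from extend_col[OF cub ncol assms(2-4) this] s show False by (simp add: snark_def)
    qed
  next
    assume nH: "\<not> three_edge_colourable (delete_edges G {e1, e2})"
    have "\<not> three_edge_colourable (G12 G e1 e2)"
    proof
      assume "three_edge_colourable (G12 G e1 e2)"
      then obtain d where "proper_3_edge_colouring (G12 G e1 e2) d"
        by (auto simp: three_edge_colourable_def)
      from restrict_col[OF fa wf this] nH show False by (auto simp: three_edge_colourable_def)
    qed
    then show "snark (G12 G e1 e2)" using c12 conn12 by (simp add: snark_def)
  qed
qed

end
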